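(* Let $\mathbf A$ be a regular BBL transformation of bandwidth $(p,q)$ and let $L\le R$ be finite integers with $R-L\ge\tau$. Then $\dim\mathcal M_{L,R}=d\tau$.
   Context: Fix $d\ge1$; $\mathbf M_d$ denotes complex $d\times d$ matrices. $\mathcal V^S_d$ is the vector space of all doubly infinite sequences $\Psi=\{\psi_j\}_{j\in\mathbb Z}$ with $\psi_j\in\mathbb C^d$. A matrix Laurent polynomial of bandwidth $(p,q)$ is $A(w,w^{-1})=\sum_{r=p}^q a_rw^r$ with integers $p\le q$, $a_r\in\mathbf M_d$, $a_p\neq0\neq a_q$. Its banded block-Laurent (BBL) transformation $\mathbf A$ acts on $\mathcal V^S_d$ by $(\mathbf A\Psi)_j=\sum_{r=p}^q a_r\psi_{j+r}$. $\mathbf A$ is regular if $\det\big(w^{-p}A(w,w^{-1})\big)$ is not the zero polynomial. Put $p'=\min(p,0)$, $q'=\max(0,q)$, $\tau=q'-p'$. For $-\infty\le L\le R\le\infty$, $\mathcal V_{L,R}$ is the subspace of sequences with $\psi_j=0$ whenever $j<L$ or $j>R$, and $\mathbf P_{L,R}$ is the projection onto $\mathcal V_{L,R}$ replacing $\psi_j$ by $0$ for $j\notin[L,R]$. The bulk solution space is $\mathcal M_{L,R}=\ker\big(\mathbf P_{L-p',R-q'}\mathbf A|_{\mathcal V_{L,R}}\big)$; for finite $L\le R$ this equals $\ker P_BA_N$, where $A_N=\mathbf P_{L,R}\mathbf A|_{\mathcal V_{L,R}}$ is the $dN\times dN$ block-Toeplitz matrix with blocks $a_{j-i}$, $N=R-L+1$,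 and $P_B=\mathbf P_{L-p',R-q'}|_{\mathcal V_{L,R}}$. *)

theory Defs
  imports "HOL-Analysis.Analysis" "HOL-Computational_Algebra.Polynomial" "HOL-Library.Function_Algebras"
begin

text \<open>Block size d is the cardinality of the finite index type 'd (so d >= 1).
  Coefficients a r :: complex^'d^'d, used for r in {p..q}.
  Sequences Psi :: int => complex^'d.\<close>

definition seq_scale :: "complex \<Rightarrow> (int \<Rightarrow> complex^'d) \<Rightarrow> (int \<Rightarrow> complex^'d)" where
  "seq_scale c \<Psi> = (\<lambda>j. c *s \<Psi> j)"

definition BBL :: "(int \<Rightarrow> complex^'d^'d) \<Rightarrow> int \<Rightarrow> int \<Rightarrow> (int \<Rightarrow> complex^'d) \<Rightarrow> (int \<Rightarrow> complex^'d)" where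
  "BBL a p q \<Psi> = (\<lambda>j. \<Sum>r\<in>{p..q}. a r *v \<Psi> (j + r))"

text \<open>Determinant of w^(-p) A(w, w^-1), a polynomial in w.\<close>
definition shifted_symbol_det :: "(int \<Rightarrow> complex^'d^'d) \<Rightarrow> int \<Rightarrow> int \<Rightarrow> complex poly" where
  "shifted_symbol_det a p q =
     det (\<chi> i j. \<Sum>r\<in>{p..q}. monom (a r $ i $ j) (nat (r - p)))"

definition regular_BBL :: "(int \<Rightarrow> complex^'d^'d) \<Rightarrow> int \<Rightarrow> int \<Rightarrow> bool" where
  "regular_BBL a p q \<longleftrightarrow> shifted_symbol_det a p q \<noteq> 0"

definition tau :: "int \<Rightarrow> int \<Rightarrow> int" where
  "tau p q = max 0 q - min p 0"

definition VLR :: "int \<Rightarrow> int \<Rightarrow> (int \<Rightarrow> complex^'d) set" where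
  "VLR L R = {\<Psi>. \<forall>j. (j < L \<or> j > R) \<longrightarrow> \<Psi> j = 0}"

definition PLR :: "int \<Rightarrow> int \<Rightarrow> (int \<Rightarrow> complex^'d) \<Rightarrow> (int \<Rightarrow> complex^'d)" where
  "PLR L R \<Psi> = (\<lambda>j. if L \<le> j \<and> j \<le> R then \<Psi> j else 0)"

definition bulk_space :: "(int \<Rightarrow> complex^'d^'d) \<Rightarrow> int \<Rightarrow> int \<Rightarrow> int \<Rightarrow> int \<Rightarrow> (int \<Rightarrow> complex^'d) set" where
  "bulk_space a p q L R =
     {\<Psi> \<in> VLR L R. PLR (L - min p 0) (R - max 0 q) (BBL a p q \<Psi>) = (\<lambda>_. 0)}"

end

theory Submission
  imports Defs
begin


lemma (in vector_space_pair) rank_nullity_fin: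
  assumes lf: "Vector_Spaces.linear s1 s2 f" and sub: "vs1.subspace V" and fE: "finite E" and VE: "V \<subseteq> vs1.span E"
  shows "vs1.dim V = vs1.dim {x\<in>V. f x = 0} + vs2.dim (f ` V)"
proof -
  let ?K = "{x\<in>V. f x = 0}"
  obtain BK where BK: "BK \<subseteq> ?K" "vs1.independent BK" "?K \<subseteq> vs1.span BK" "card BK = vs1.dim ?K"
    by (rule vs1.basis_exists)
  obtain B where B: "BK \<subseteq> B" "B \<subseteq> V" "vs1.independent B" "V \<subseteq> vs1.span B"
    using vs1.maximal_independent_subset_extend[of BK V] BK by auto
  have fB: "finite B" using vs1.independent_span_bound[OF fE B(3)] B VE by blast
  have dimV: "vs1.dim V = card B" using vs1.basis_card_eq_dim B by metis
  define C where "C = B - BK"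
  have fC: "finite C" "finite BK" using fB B by (auto simp: C_def intro: finite_subset)
  have spC: "vs1.span C \<subseteq> V" by (rule vs1.span_minimal) (use B sub in \<open>auto simp: C_def\<close>)
  have key: "x = 0" if "x \<in> vs1.span C" "f x = 0" for x
  proof -
    have "x \<in> ?K" using that spC by auto
    hence xBK: "x \<in> vs1.span BK" using BK by auto
    have "x \<in> range (\<lambda>u. \<Sum>v\<in>C. u v *a v)" using that(1) vs1.span_finite[OF fC(1)] by simp
    then obtain u where u: "x = (\<Sum>v\<in>C. u v *a v)" by (elim rangeE)
    have "x \<in> range (\<lambda>u. \<Sum>v\<in>BK. u v *a v)" using xBK vs1.span_finite[OF fC(2)] by simp
    then obtain w where w: "x = (\<Sum>v\<in>BK. w v *a v)" by (elim rangeE)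
    define g where "g v = (if v \<in> C then u v else - w v)" for v
    have BU: "B = C \<union> BK" "C \<inter> BK = {}" using B by (auto simp: C_def)
    have "(\<Sum>v\<in>B. g v *a v) = (\<Sum>v\<in>C. g v *a v) + (\<Sum>v\<in>BK. g v *a v)"
      unfolding BU(1) by (rule sum.union_disjoint) (use fC BU in auto)
    also have "(\<Sum>v\<in>C. g v *a v) = x" unfolding u by (auto simp: g_def intro!: sum.cong)
    also have "(\<Sum>v\<in>BK. g v *a v) = (\<Sum>v\<in>BK. - (w v *a v))"
      by (rule sum.cong) (use BU in \<open>auto simp: g_def\<close>)
    also have "\<dots> = - x" by (simp add: sum_negf w)
    finally have "(\<Sum>v\<in>B. g v *a v) = 0" by simp
    moreover have nd: "\<not> (\<exists>u. (\<exists>v\<in>B. u v \<noteq> 0) \<and> (\<Sum>v\<in>B. u v *a v) = 0)"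
      using vs1.dependent_finite[OF fB] B(3) by simp
    ultimately have "\<forall>v\<in>B. g v = 0" by blast
    hence "\<forall>v\<in>C. u v = 0" by (auto simp: g_def C_def)
    thus "x = 0" unfolding u by simp
  qed
  have inj: "inj_on f (vs1.span C)"
    using linear_inj_on_iff_eq_0[OF lf vs1.subspace_span] key by blast
  have indC: "vs1.independent C" using B(3) vs1.independent_mono C_def by blast
  have indfC: "vs2.independent (f ` C)" by (rule linear_independent_injective_image[OF lf indC inj])
  have injC: "inj_on f C" using inj vs1.span_superset inj_on_subset by blast
  have fBsp: "f ` B \<subseteq> vs2.span (f ` C)"
  proof
    fix y assume "y \<in> f ` B"
    then obtain b where b: "b \<in> B" "y = f b" by auto
    show "y \<in> vs2.span (f ` C)"
    proof (cases "b \<in> BK")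
      case True thus ?thesis using BK b vs2.span_zero by auto
    next
      case False thus ?thesis using b by (auto simp: C_def intro!: vs2.span_base)
    qed
  qed
  have "f ` V \<subseteq> f ` vs1.span B" using B by auto
  also have "\<dots> = vs2.span (f ` B)" by (rule linear_span_image[OF lf, symmetric])
  also have "\<dots> \<subseteq> vs2.span (f ` C)" by (rule vs2.span_minimal[OF fBsp vs2.subspace_span])
  finally have Vsp: "f ` V \<subseteq> vs2.span (f ` C)" .
  have "f ` C \<subseteq> f ` V" using B by (auto simp: C_def)
  hence d2: "vs2.dim (f ` V) = card C"
    using vs2.basis_card_eq_dim[OF _ Vsp indfC] card_image[OF injC] by simp
  have "card C = card B - card BK" unfolding C_def using B fC by (simp add: card_Diff_subset)
  moreover have "card BK \<le> card B" using B fB by (simp add: card_mono)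
  ultimately have "card B = card BK + card C" by simp
  thus ?thesis using dimV d2 BK by simp
qed



lemma det_poly_eval:
  fixes M :: "complex poly^'n^'n"
  shows "poly (det M) w = det (\<chi> i j. poly (M$i$j) w)"
  by (simp add: det_def poly_sum poly_prod poly_of_int)

lemma shift_sum:
  fixes G :: "int \<Rightarrow> complex"
  assumes "{p+j..q+j} \<subseteq> {L..R}"
  shows "(\<Sum>r\<in>{p..q}. G r) = (\<Sum>k\<in>{L..R}. if k - j \<in> {p..q} then G (k - j) else 0)"
proof -
  have "(\<Sum>k\<in>{L..R}. if k - j \<in> {p..q} then G (k - j) else 0) = (\<Sum>k\<in>{p+j..q+j}. G (k - j))"
    by (rule sum.mono_neutral_cong_right) (use assms in auto)
  also have "{p+j..q+j} = (+) j ` {p..q}" by (simp add: image_add_atLeastAtMost)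
  also have "(\<Sum>k\<in>(+) j ` {p..q}. G (k - j)) = (\<Sum>r\<in>{p..q}. G r)"
    by (subst sum.reindex) (auto simp: o_def)
  finally show ?thesis by simp
qed

lemma dual_zero:
  fixes a :: "int \<Rightarrow> complex^'d^'d" and c :: "int \<Rightarrow> 'd \<Rightarrow> complex"
  assumes reg: "regular_BBL a p q" and LL: "L \<le> L' + p" and RR: "R' + q \<le> R"
  and H: "\<And>k m. k \<in> {L..R} \<Longrightarrow> (\<Sum>j\<in>{L'..R'}. \<Sum>i\<in>UNIV. (if k - j \<in> {p..q} then a (k-j) $ i $ m else 0) * c j i) = 0"
  and j0: "j0 \<in> {L'..R'}"
  shows "c j0 i0 = 0"
proof (rule ccontr)
  assume nz: "c j0 i0 \<noteq> 0"
  define uu where "uu w = (\<chi> i. \<Sum>j\<in>{L'..R'}. c j i * w ^ nat (j - L'))" for w :: complex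
  define BB where "BB w = (\<chi> i m. \<Sum>r\<in>{p..q}. a r $ i $ m * w ^ nat (r - p))" for w :: complex
  have C1: "(\<Sum>i\<in>UNIV. uu w $ i * BB w $ i $ m) = 0" for w m
  proof -
    define F where "F i j k = (if k - j \<in> {p..q} then c j i * a (k-j) $ i $ m * w ^ nat (k - L' - p) else 0)" for i j k
    have "(\<Sum>i\<in>UNIV. uu w $ i * BB w $ i $ m) = (\<Sum>i\<in>UNIV. \<Sum>j\<in>{L'..R'}. \<Sum>r\<in>{p..q}. c j i * a r $ i $ m * w ^ (nat (j - L') + nat (r - p)))"
      by (simp add: uu_def BB_def sum_product power_add mult_ac)
    also have "\<dots> = (\<Sum>i\<in>UNIV. \<Sum>j\<in>{L'..R'}. \<Sum>k\<in>{L..R}. F i j k)"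
    proof (rule sum.cong[OF refl], rule sum.cong[OF refl])
      fix i :: 'd and j assume "i \<in> UNIV" and j: "j \<in> {L'..R'}"
      have "{p+j..q+j} \<subseteq> {L..R}" using j LL RR by auto
      hence "(\<Sum>r\<in>{p..q}. c j i * a r $ i $ m * w ^ (nat (j - L') + nat (r - p)))
          = (\<Sum>k\<in>{L..R}. if k - j \<in> {p..q} then c j i * a (k-j) $ i $ m * w ^ (nat (j - L') + nat (k - j - p)) else 0)"
        by (rule shift_sum)
      also have "\<dots> = (\<Sum>k\<in>{L..R}. F i j k)"
      proof (rule sum.cong[OF refl])
        fix k assume "k \<in> {L..R}"
        show "(if k - j \<in> {p..q} then c j i * a (k-j) $ i $ m * w ^ (nat (j - L') + nat (k - j - p)) else 0) = F i j k"
        proof (cases "k - j \<in> {p..q}")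
          case True
          hence "nat (j - L') + nat (k - j - p) = nat (k - L' - p)" using j by auto
          thus ?thesis using True by (simp add: F_def)
        next
          case False show ?thesis unfolding F_def if_not_P[OF False] by (rule refl)
        qed
      qed
      finally show "(\<Sum>r\<in>{p..q}. c j i * a r $ i $ m * w ^ (nat (j - L') + nat (r - p))) = (\<Sum>k\<in>{L..R}. F i j k)" .
    qed
    also have "\<dots> = (\<Sum>j\<in>{L'..R'}. \<Sum>i\<in>UNIV. \<Sum>k\<in>{L..R}. F i j k)" by (rule sum.swap)
    also have "\<dots> = (\<Sum>j\<in>{L'..R'}. \<Sum>k\<in>{L..R}. \<Sum>i\<in>UNIV. F i j k)" by (intro sum.cong refl sum.swap)
    also have "\<dots> = (\<Sum>k\<in>{L..R}. \<Sum>j\<in>{L'..R'}. \<Sum>i\<in>UNIV. F i j k)" by (rule sum.swap)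
    also have "\<dots> = (\<Sum>k\<in>{L..R}. w ^ nat (k - L' - p) * (\<Sum>j\<in>{L'..R'}. \<Sum>i\<in>UNIV. (if k - j \<in> {p..q} then a (k-j) $ i $ m else 0) * c j i))"
      by (auto simp: F_def sum_distrib_left intro!: sum.cong)
    also have "\<dots> = 0" using H by simp
    finally show ?thesis .
  qed
  have C2: "det (BB w) = poly (shifted_symbol_det a p q) w" for w
    unfolding shifted_symbol_det_def det_poly_eval
    by (rule arg_cong[where f=det]) (simp add: BB_def poly_sum poly_monom vec_eq_iff)
  define P where "P = (\<Sum>j\<in>{L'..R'}. monom (c j i0) (nat (j - L')))"
  have "coeff P (nat (j0 - L')) = (\<Sum>j\<in>{L'..R'}. if j = j0 then c j i0 else 0)"
    unfolding P_def coeff_sum coeff_monom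
    by (rule sum.cong) (use j0 in auto)
  also have "\<dots> = c j0 i0" using j0 by simp
  finally have "P \<noteq> 0" using nz by auto
  moreover have "shifted_symbol_det a p q \<noteq> 0" using reg by (simp add: regular_BBL_def)
  ultimately have PD: "P * shifted_symbol_det a p q \<noteq> 0" by simp
  have fin: "finite {x. poly (P * shifted_symbol_det a p q) x = 0}" by (rule poly_roots_finite[OF PD])
  have "{x. poly (P * shifted_symbol_det a p q) x = 0} \<noteq> UNIV"
  proof
    assume "{x. poly (P * shifted_symbol_det a p q) x = 0} = UNIV"
    hence "finite (UNIV :: complex set)" using fin by simp
    thus False using infinite_UNIV_char_0 by blast
  qed
  then obtain w where w: "poly (P * shifted_symbol_det a p q) w \<noteq> 0" by auto
  have u0: "uu w $ i0 \<noteq> 0" using w by (simp add: uu_def P_def poly_sum poly_monom)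
  have "det (transpose (BB w)) \<noteq> 0" using w C2 by simp
  hence "invertible (transpose (BB w))" by (simp add: invertible_det_nz)
  then obtain B where B: "B ** transpose (BB w) = mat 1" unfolding invertible_def by blast
  have T0: "transpose (BB w) *v uu w = 0"
    using C1 by (simp add: vec_eq_iff matrix_vector_mult_def transpose_def mult.commute)
  have "uu w = B *v (transpose (BB w) *v uu w)" by (simp only: matrix_vector_mul_assoc B matrix_vector_mul_lid)
  also have "\<dots> = 0" unfolding T0 by simp
  finally show False using u0 by simp
qed



lemma sum_fun_apply: "(sum F S) t = (\<Sum>x\<in>S. F x t)"
  by (induct S rule: infinite_finite_induct) auto

interpretation sq: vector_space "seq_scale :: complex \<Rightarrow> (int \<Rightarrow> complex^'d) \<Rightarrow> _"
  by unfold_locales (auto simp: seq_scale_def fun_eq_iff vector_add_ldistrib vector_sadd_rdistrib vector_smult_assoc)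

interpretation sqp: vector_space_pair "seq_scale :: complex \<Rightarrow> (int \<Rightarrow> complex^'d) \<Rightarrow> _"
   "seq_scale :: complex \<Rightarrow> (int \<Rightarrow> complex^'d) \<Rightarrow> _" ..

interpretation sqc: vector_space_pair "seq_scale :: complex \<Rightarrow> (int \<Rightarrow> complex^'d) \<Rightarrow> _"
   "(*) :: complex \<Rightarrow> complex \<Rightarrow> complex" ..

definition useq :: "int \<Rightarrow> 'd \<Rightarrow> (int \<Rightarrow> complex^'d)" where
  "useq j i = (\<lambda>t. if t = j then axis i 1 else 0)"

definition EB :: "int \<Rightarrow> int \<Rightarrow> (int \<Rightarrow> complex^'d) set" where
  "EB L R = (\<lambda>(j,i). useq j i) ` ({L..R} \<times> UNIV)"

lemma expand_VLR:
  assumes "\<Psi> \<in> VLR L R"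
  shows "\<Psi> = (\<Sum>j\<in>{L..R}. \<Sum>i\<in>UNIV. seq_scale (\<Psi> j $ i) (useq j i))"
proof
  fix t
  show "\<Psi> t = (\<Sum>j\<in>{L..R}. \<Sum>i\<in>UNIV. seq_scale (\<Psi> j $ i) (useq j i)) t"
  proof (cases "t \<in> {L..R}")
    case True
    have "(\<Sum>j\<in>{L..R}. \<Sum>i\<in>UNIV. seq_scale (\<Psi> j $ i) (useq j i)) t
        = (\<Sum>j\<in>{L..R}. \<Sum>i\<in>UNIV. (if t = j then \<Psi> j $ i *s axis i 1 else 0))"
      by (auto simp: sum_fun_apply seq_scale_def useq_def intro!: sum.cong)
    also have "\<dots> = (\<Sum>j\<in>{L..R}. if t = j then (\<Sum>i\<in>UNIV. \<Psi> j $ i *s axis i 1) else 0)"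
      by (rule sum.cong) auto
    also have "\<dots> = (\<Sum>i\<in>UNIV. \<Psi> t $ i *s axis i 1)"
      using True by (simp add: sum.delta sum.delta')
    also have "\<dots> = \<Psi> t" by (rule basis_expansion)
    finally show ?thesis by simp
  next
    case False
    hence "\<Psi> t = 0" using assms by (auto simp: VLR_def)
    moreover have "(\<Sum>j\<in>{L..R}. \<Sum>i\<in>UNIV. seq_scale (\<Psi> j $ i) (useq j i)) t = 0"
      using False by (auto simp: sum_fun_apply seq_scale_def useq_def intro!: sum.neutral)
    ultimately show ?thesis by simp
  qed
qed

lemma EB_sub: "EB L R \<subseteq> VLR L R"
  by (auto simp: EB_def VLR_def useq_def)

lemma EB_span: "VLR L R \<subseteq> sq.span (EB L R)"
proof
  fix \<Psi> :: "int \<Rightarrow> complex^'d" assume "\<Psi> \<in> VLR L R"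
  hence e: "\<Psi> = (\<Sum>j\<in>{L..R}. \<Sum>i\<in>UNIV. seq_scale (\<Psi> j $ i) (useq j i))" by (rule expand_VLR)
  show "\<Psi> \<in> sq.span (EB L R)"
    by (subst e, intro sq.span_sum sq.span_scale, rule sq.span_base) (auto simp: EB_def)
qed

lemma finite_EB: "finite (EB L R)" by (simp add: EB_def)

lemma useq_inj: "inj_on (\<lambda>(j,i). useq j i :: int \<Rightarrow> complex^'d) X"
proof (rule inj_onI, clarify)
  fix j i j' i' assume h: "useq j i = (useq j' i' :: int \<Rightarrow> complex^'d)"
  hence "useq j i j $ i = useq j' i' j $ i" by simp
  hence "j = j'" by (auto simp: useq_def axis_def split: if_splits)
  moreover have "useq j i j' = (useq j' i' j' :: complex^'d)" using h by simp
  hence "i = i'" using \<open>j = j'\<close> by (simp add: useq_def axis_eq_axis)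
  ultimately show "j = j' \<and> i = i'" by simp
qed

lemma card_EB: "card (EB L R :: (int \<Rightarrow> complex^'d) set) = nat (R - L + 1) * CARD('d)"
  unfolding EB_def by (simp add: card_image[OF useq_inj] card_cartesian_product)

lemma indep_EB: "sq.independent (EB L R :: (int \<Rightarrow> complex^'d) set)"
proof (rule sq.independent_if_scalars_zero[OF finite_EB])
  fix f :: "(int \<Rightarrow> complex^'d) \<Rightarrow> complex" and x :: "int \<Rightarrow> complex^'d"
  assume s: "(\<Sum>x\<in>EB L R. seq_scale (f x) x) = 0" and x: "x \<in> EB L R"
  from x obtain j0 and i0 :: 'd where j0: "j0 \<in> {L..R}" and xe: "x = useq j0 i0" by (auto simp: EB_def)
  have "(\<Sum>x\<in>EB L R. seq_scale (f x) x) = (\<Sum>ji\<in>{L..R} \<times> UNIV. seq_scale (f ((\<lambda>(j,i). useq j i) ji)) ((\<lambda>(j,i). useq j i) ji))"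
    unfolding EB_def by (subst sum.reindex[OF useq_inj]) (simp add: o_def)
  hence "0 = (\<Sum>ji\<in>{L..R} \<times> UNIV. seq_scale (f ((\<lambda>(j,i). useq j i) ji)) ((\<lambda>(j,i). useq j i) ji)) j0 $ i0"
    using s by simp
  also have "\<dots> = (\<Sum>ji\<in>{L..R} \<times> UNIV. if ji = (j0,i0) then f x else 0)"
    unfolding sum_fun_apply sum_component
    by (rule sum.cong) (auto simp: seq_scale_def useq_def axis_def xe split: if_splits)
  also have "\<dots> = f x" using j0 by simp
  finally show "f x = 0" by simp
qed

lemma dim_VLR: "sq.dim (VLR L R :: (int \<Rightarrow> complex^'d) set) = nat (R - L + 1) * CARD('d)"
  using sq.basis_card_eq_dim[OF EB_sub EB_span indep_EB] card_EB by metis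

lemma subspace_VLR: "sq.subspace (VLR L R)"
  by (auto simp: sq.subspace_def VLR_def seq_scale_def)



lemma lin_f: "Vector_Spaces.linear (seq_scale :: complex \<Rightarrow> (int \<Rightarrow> complex^'d) \<Rightarrow> _) seq_scale
   (\<lambda>\<Psi>. PLR L' R' (BBL (a :: int \<Rightarrow> complex^'d^'d) p q \<Psi>))"
  unfolding Vector_Spaces.linear_iff
proof (intro conjI allI)
  show "vector_space (seq_scale :: complex \<Rightarrow> (int \<Rightarrow> complex^'d) \<Rightarrow> _)" by (rule sq.vector_space_axioms)
  thus "vector_space (seq_scale :: complex \<Rightarrow> (int \<Rightarrow> complex^'d) \<Rightarrow> _)" .
  fix x y :: "int \<Rightarrow> complex^'d"
  show "PLR L' R' (BBL a p q (x + y)) = PLR L' R' (BBL a p q x) + PLR L' R' (BBL a p q y)"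
    by (auto simp: fun_eq_iff PLR_def BBL_def matrix_vector_right_distrib sum.distrib)
next
  fix c :: complex and x :: "int \<Rightarrow> complex^'d"
  show "PLR L' R' (BBL a p q (seq_scale c x)) = seq_scale c (PLR L' R' (BBL a p q x))"
    by (auto simp: fun_eq_iff PLR_def BBL_def seq_scale_def vec_eq_iff matrix_vector_mult_def
        sum_component sum_distrib_left mult_ac)
qed

lemma mv_axis: "((A :: complex^'d^'d) *v axis m 1) $ i = A $ i $ m"
  by (simp add: matrix_vector_mult_def axis_def vec_lambda_beta if_distrib[of "\<lambda>x. _ * x"] cong: if_cong)

lemma useq_in_VLR: "k \<in> {L..R} \<Longrightarrow> useq k m \<in> VLR L R"
  by (auto simp: useq_def VLR_def)

lemma f_useq:
  assumes "j \<in> {L'..R'}"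
  shows "PLR L' R' (BBL (a :: int \<Rightarrow> complex^'d^'d) p q (useq k m)) j $ i = (if k - j \<in> {p..q} then a (k-j) $ i $ m else 0)"
proof -
  have "PLR L' R' (BBL a p q (useq k m)) j $ i = (\<Sum>r\<in>{p..q}. (a r *v useq k m (j+r)) $ i)"
    using assms by (simp add: PLR_def BBL_def sum_component)
  also have "\<dots> = (\<Sum>r\<in>{p..q}. if r = k - j then a r $ i $ m else 0)"
    by (rule sum.cong) (auto simp: useq_def mv_axis)
  also have "\<dots> = (if k - j \<in> {p..q} then a (k-j) $ i $ m else 0)" by (simp add: sum.delta)
  finally show ?thesis .
qed

lemma surj_f:
  fixes a :: "int \<Rightarrow> complex^'d^'d" and p q L R :: int
  assumes reg: "regular_BBL a p q"
  defines "L' \<equiv> L - min p 0" and "R' \<equiv> R - max 0 q"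
  shows "VLR L' R' \<subseteq> sq.span ((\<lambda>\<Psi>. PLR L' R' (BBL a p q \<Psi>)) ` VLR L R)"
proof (rule ccontr)
  let ?f = "\<lambda>\<Psi>. PLR L' R' (BBL a p q \<Psi>)"
  let ?U = "?f ` VLR L R"
  assume "\<not> VLR L' R' \<subseteq> sq.span ?U"
  then obtain w0 where w0W: "w0 \<in> VLR L' R'" and w0U: "w0 \<notin> sq.span ?U" by auto
  obtain BU where BU: "BU \<subseteq> ?U" "sq.independent BU" "?U \<subseteq> sq.span BU"
    by (rule sq.basis_exists)
  have w0BU: "w0 \<notin> sq.span BU" using w0U sq.span_mono[OF BU(1)] by auto
  have ind: "sq.independent (insert w0 BU)" by (rule sq.independent_insertI[OF w0BU BU(2)])
  define h where "h = sqc.construct (insert w0 BU) (\<lambda>b. if b = w0 then 1 else 0)"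
  have lin_h: "Vector_Spaces.linear seq_scale (*) h" unfolding h_def by (rule sqc.linear_construct[OF ind])
  have hw0: "h w0 = 1" unfolding h_def by (subst sqc.construct_basis[OF ind]) auto
  have hBU: "h b = 0" if "b \<in> BU" for b
  proof -
    have "b \<noteq> w0" using that w0BU sq.span_base by blast
    thus ?thesis unfolding h_def using that by (subst sqc.construct_basis[OF ind]) auto
  qed
  have hU: "h u = 0" if "u \<in> ?U" for u
    using sqc.linear_eq_0_on_span[OF lin_h, of BU u] hBU BU(3) that by blast
  define c where "c j i = h (useq j i)" for j i
  have hexp: "h \<Psi> = (\<Sum>j\<in>{L'..R'}. \<Sum>i\<in>UNIV. \<Psi> j $ i * c j i)" if "\<Psi> \<in> VLR L' R'" for \<Psi>
  proof -
    have "h \<Psi> = h (\<Sum>j\<in>{L'..R'}. \<Sum>i\<in>UNIV. seq_scale (\<Psi> j $ i) (useq j i))"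
      by (rule arg_cong[where f=h, OF expand_VLR[OF that]])
    also have "\<dots> = (\<Sum>j\<in>{L'..R'}. \<Sum>i\<in>UNIV. \<Psi> j $ i * c j i)"
      by (simp add: sqc.linear_sum[OF lin_h] sqc.linear_scale[OF lin_h] c_def)
    finally show ?thesis .
  qed
  have fW: "?f \<Psi> \<in> VLR L' R'" for \<Psi> by (auto simp: VLR_def PLR_def)
  have H: "(\<Sum>j\<in>{L'..R'}. \<Sum>i\<in>UNIV. (if k - j \<in> {p..q} then a (k-j) $ i $ m else 0) * c j i) = 0"
    if k: "k \<in> {L..R}" for k m
  proof -
    have "0 = h (?f (useq k m))" using hU useq_in_VLR[OF k] by auto
    also have "\<dots> = (\<Sum>j\<in>{L'..R'}. \<Sum>i\<in>UNIV. ?f (useq k m) j $ i * c j i)" by (rule hexp[OF fW])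
    also have "\<dots> = (\<Sum>j\<in>{L'..R'}. \<Sum>i\<in>UNIV. (if k - j \<in> {p..q} then a (k-j) $ i $ m else 0) * c j i)"
      by (intro sum.cong refl) (simp add: f_useq)
    finally show ?thesis by simp
  qed
  have c0: "c j i = 0" if "j \<in> {L'..R'}" for j i
    by (rule dual_zero[OF reg _ _ H that]) (auto simp: L'_def R'_def)
  have "h w0 = 0" using hexp[OF w0W] c0 by simp
  thus False using hw0 by simp
qed

theorem mainTheorem3:
  fixes a :: "int \<Rightarrow> complex^'d^'d" and p q L R :: int
  assumes "p \<le> q" and "a p \<noteq> 0" and "a q \<noteq> 0"
    and "regular_BBL a p q"
    and "L \<le> R" and "R - L \<ge> tau p q"
  shows "vector_space.dim seq_scale (bulk_space a p q L R) = CARD('d) * nat (tau p q)"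
proof -
  define L' where "L' = L - min p 0"
  define R' where "R' = R - max 0 q"
  let ?f = "\<lambda>\<Psi>. PLR L' R' (BBL a p q \<Psi>)"
  let ?V = "VLR L R :: (int \<Rightarrow> complex^'d) set"
  have RN: "sq.dim ?V = sq.dim {x\<in>?V. ?f x = 0} + sq.dim (?f ` ?V)"
    by (rule sqp.rank_nullity_fin[OF lin_f subspace_VLR finite_EB EB_span])
  have K: "{x\<in>?V. ?f x = 0} = bulk_space a p q L R"
    by (simp add: bulk_space_def L'_def R'_def zero_fun_def)
  have sub: "?f ` ?V \<subseteq> VLR L' R'" by (auto simp: VLR_def PLR_def)
  have sup: "VLR L' R' \<subseteq> sq.span (?f ` ?V)"
    using surj_f[OF assms(4), of L R] by (simp add: L'_def R'_def)
  have "sq.span (?f ` ?V) = sq.span (VLR L' R')"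
  proof
    show "sq.span (?f ` ?V) \<subseteq> sq.span (VLR L' R')" by (rule sq.span_mono[OF sub])
    show "sq.span (VLR L' R') \<subseteq> sq.span (?f ` ?V)"
      using sq.span_minimal[OF sup sq.subspace_span] by simp
  qed
  hence "sq.dim (?f ` ?V) = sq.dim (VLR L' R' :: (int \<Rightarrow> complex^'d) set)" by (rule sq.span_eq_dim)
  also have "\<dots> = nat (R' - L' + 1) * CARD('d)" by (rule dim_VLR)
  finally have dW: "sq.dim (?f ` ?V) = nat (R' - L' + 1) * CARD('d)" .
  have dV: "sq.dim ?V = nat (R - L + 1) * CARD('d)" by (rule dim_VLR)
  have "nat (R - L + 1) = nat (R' - L' + 1) + nat (tau p q)"
    using assms(6) by (simp add: L'_def R'_def tau_def)
  hence "sq.dim (bulk_space a p q L R) = nat (tau p q) * CARD('d)"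
    using RN K dW dV by (simp add: add_mult_distrib)
  thus ?thesis by (simp add: mult.commute)
qed

end
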